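(* Let $k\ge1$ and assume $\mathbb{E}[m_0^{r_k+\varepsilon}]<\infty$ for some $\varepsilon>0$. Let $(k_n)$ be positive numbers with $k_n\to\infty$ and $k_n/e^{\theta n}\to0$ for every $\theta>0$. Then $$\lim_{n\to\infty}\frac1n\log\mathbb{P}_k(Z_n\le k_n)=\log\gamma_k.$$
   Context: Branching process in a random environment (BPRE). The environment $\xi=(\xi_0,\xi_1,\dots)$ is i.i.d.; each $\xi_n$ determines an offspring distribution $(p_i(\xi_n))_{i\ge0}$ with generating function $f_n$. $Z_{n+1}=\sum_{i=1}^{Z_n}N_{n,i}$, where conditionally on $\xi$ the $N_{n,i}$ are independent with generating function $f_n$. $\mathbb{P}_k$ is the annealed law with $Z_0=k$. $m_0=\sum_i i\,p_i(\xi_0)$. Standing assumptions: $p_0(\xi_0)=0$ a.s.; $\mathbb{E}\log m_0\in(0,\infty)$; $\mathbb{E}[\frac{Z_1}{m_0}\log^+Z_1]<\infty$ (with $Z_0=1$); $\mathbb{P}(p_1(\xi_0)>0)>0$. $\gamma_k=\mathbb{P}_k(Z_1=k)=\mathbb{E}[p_1(\xi_0)^k]$; $r_k\in(0,\infty)$ is the solution of $\mathbb{E}[m_0^{-r_k}]=\gamma_k$ (assumed to exist). *)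

theory Defs
  imports "HOL-Probability.Probability"
begin

text \<open>Branching process in a random environment. An environment state e (drawn from
  the probability space M) determines the offspring distribution p e :: nat pmf,
  i.e. p_i(e) = pmf (p e) i.\<close>

fun sum_iid :: "nat pmf \<Rightarrow> nat \<Rightarrow> nat pmf" where
  "sum_iid q 0 = return_pmf 0"
| "sum_iid q (Suc j) = bind_pmf q (\<lambda>a. map_pmf (\<lambda>b. a + b) (sum_iid q j))"

text \<open>Quenched law of Z_n given the environment sequence xi and Z_0 = k:
  conditionally on xi, Z_{n+1} is the sum of Z_n i.i.d. variables with law p (xi n).\<close>
fun quenched_law :: "('e \<Rightarrow> nat pmf) \<Rightarrow> (nat \<Rightarrow> 'e) \<Rightarrow> nat \<Rightarrow> nat \<Rightarrow> nat pmf" where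
  "quenched_law p xi k 0 = return_pmf k"
| "quenched_law p xi k (Suc n) = bind_pmf (quenched_law p xi k n) (sum_iid (p (xi n)))"

definition annealed_prob :: "'e measure \<Rightarrow> ('e \<Rightarrow> nat pmf) \<Rightarrow> nat \<Rightarrow> nat \<Rightarrow> nat set \<Rightarrow> real" where
  "annealed_prob M p k n A =
     (\<integral>xi. measure_pmf.prob (quenched_law p xi k n) A \<partial>(PiM UNIV (\<lambda>_::nat. M)))"

definition mean_offspring :: "('e \<Rightarrow> nat pmf) \<Rightarrow> 'e \<Rightarrow> real" where
  "mean_offspring p e = measure_pmf.expectation (p e) real"

text \<open>gamma_k = P_k(Z_1 = k) = E[p_1(xi_0)^k].\<close>
definition gamma_k :: "'e measure \<Rightarrow> ('e \<Rightarrow> nat pmf) \<Rightarrow> nat \<Rightarrow> real" where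
  "gamma_k M p k = (\<integral>e. (pmf (p e) 1) ^ k \<partial>M)"

end

theory Submission
  imports Defs "HOL-Probability.Probability"
begin


lemma sum_iid_support:
  assumes "0 \<notin> set_pmf q"
  shows "set_pmf (sum_iid q j) \<subseteq> {j..}"
proof (induction j)
  case 0 then show ?case by simp
next
  case (Suc j)
  have "\<And>a. a \<in> set_pmf q \<Longrightarrow> a \<ge> 1" using assms by (metis less_one not_le)
  with Suc show ?case by (auto simp: set_bind_pmf) (fastforce)
qed

lemma quenched_support:
  assumes "\<And>i. 0 \<notin> set_pmf (p (xi i))"
  shows "set_pmf (quenched_law p xi j n) \<subseteq> {j..}"
proof (induction n)
  case 0 then show ?case by simp
next
  case (Suc n)
  show ?case using Suc sum_iid_support[OF assms] by (auto simp: set_bind_pmf) fastforce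
qed

lemma quenched_shift:
  "quenched_law p (case_nat e \<omega>) j (Suc n) = bind_pmf (sum_iid (p e) j) (\<lambda>l. quenched_law p \<omega> l n)"
proof (induction n)
  case 0 then show ?case by (simp add: bind_return_pmf bind_return_pmf')
next
  case (Suc n)
  show ?case by (subst quenched_law.simps, subst Suc) (simp add: bind_assoc_pmf)
qed

lemma (in prob_space) nn_integral_PiM_split:
  assumes f[measurable]: "f \<in> borel_measurable (PiM UNIV (\<lambda>_::nat. M))"
  shows "(\<integral>\<^sup>+X. f X \<partial>PiM UNIV (\<lambda>_::nat. M)) = (\<integral>\<^sup>+x. \<integral>\<^sup>+X. f (case_nat x X) \<partial>PiM UNIV (\<lambda>_::nat. M) \<partial>M)"
proof -
  interpret S: sequence_space M ..
  interpret P: pair_sigma_finite M "\<Pi>\<^sub>M i::nat\<in>UNIV. M" ..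
  have "(\<integral>\<^sup>+X. f X \<partial>S.S) = (\<integral>\<^sup>+X. f ((\<lambda>(s, \<omega>). case_nat s \<omega>) X) \<partial>(M \<Otimes>\<^sub>M S.S))"
    by (subst S.PiM_iter[symmetric]) (simp add: nn_integral_distr)
  also have "\<dots> = (\<integral>\<^sup>+x. \<integral>\<^sup>+X. f ((\<lambda>(s, \<omega>). case_nat s \<omega>) (x, X)) \<partial>S.S \<partial>M)"
    by (subst S.nn_integral_fst) simp_all
  finally show ?thesis by simp
qed

lemma measurable_pmf_nn_integral:
  fixes Q :: "'a \<Rightarrow> nat pmf"
  assumes "\<And>z. (\<lambda>x. pmf (Q x) z) \<in> borel_measurable N"
    and "\<And>z. (\<lambda>x. h x z) \<in> borel_measurable N"
  shows "(\<lambda>x. \<integral>\<^sup>+z. h x z \<partial>measure_pmf (Q x)) \<in> borel_measurable N"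
proof -
  have "(\<lambda>x. \<integral>\<^sup>+z. h x z \<partial>measure_pmf (Q x)) = (\<lambda>x. \<Sum>z. ennreal (pmf (Q x) z) * h x z)"
    by (simp add: nn_integral_measure_pmf nn_integral_count_space_nat)
  also have "\<dots> \<in> borel_measurable N" using assms by measurable
  finally show ?thesis .
qed



lemma pmf_map_add: fixes S :: "nat pmf" shows "pmf (map_pmf (\<lambda>b. a + b) S) z = (if a \<le> z then pmf S (z - a) else 0)"
proof -
  have "(\<lambda>b. a + b) -` {z} = (if a \<le> z then {z - a} else {})" by (auto split: if_splits)
  then show ?thesis by (simp add: pmf_map measure_pmf_single)
qed

lemma pmf_sum_iid_Suc:
  "pmf (sum_iid q (Suc j)) z = (\<Sum>a\<le>z. pmf q a * pmf (sum_iid q j) (z - a))"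
proof -
  have "ennreal (pmf (sum_iid q (Suc j)) z) = (\<integral>\<^sup>+a. pmf (map_pmf (\<lambda>b. a + b) (sum_iid q j)) z \<partial>measure_pmf q)"
    by (simp add: ennreal_pmf_bind)
  also have "\<dots> = (\<Sum>a\<in>{..z}. ennreal (pmf (map_pmf (\<lambda>b. a + b) (sum_iid q j)) z) * pmf q a)"
    by (rule nn_integral_measure_pmf_support) (auto simp: pmf_map_add)
  also have "\<dots> = ennreal (\<Sum>a\<le>z. pmf q a * pmf (sum_iid q j) (z - a))"
    by (simp add: pmf_map_add ennreal_mult'' sum_ennreal[symmetric] mult.commute pmf_nonneg  del: sum_ennreal)
  finally show ?thesis by (simp add: sum_nonneg pmf_nonneg)
qed

lemma measurable_pmf_sum_iid:
  fixes q :: "'a \<Rightarrow> nat pmf"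
  assumes "\<And>i. (\<lambda>x. pmf (q x) i) \<in> borel_measurable N"
  shows "(\<lambda>x. pmf (sum_iid (q x) j) z) \<in> borel_measurable N"
proof (induction j arbitrary: z)
  case 0 then show ?case by (simp add: pmf_return)
next
  case (Suc j)
  show ?case unfolding pmf_sum_iid_Suc using Suc assms by measurable
qed

lemma measurable_pmf_quenched:
  assumes "\<And>i. (\<lambda>e. pmf (p e) i) \<in> borel_measurable M"
  shows "(\<lambda>xi. pmf (quenched_law p xi j n) z) \<in> borel_measurable (PiM UNIV (\<lambda>_::nat. M))"
proof (induction n arbitrary: z)
  case 0 then show ?case by (simp add: pmf_return)
next
  case (Suc n)
  have c: "\<And>i. (\<lambda>xi. pmf (p (xi n)) i) \<in> borel_measurable (PiM UNIV (\<lambda>_::nat. M))"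
    using assms by measurable
  have e: "(\<lambda>xi. pmf (quenched_law p xi j (Suc n)) z) =
     (\<lambda>xi. enn2real (\<integral>\<^sup>+l. ennreal (pmf (sum_iid (p (xi n)) l) z) \<partial>measure_pmf (quenched_law p xi j n)))"
    by (simp add: ennreal_pmf_bind[symmetric])
  show ?case unfolding e
    by (intro borel_measurable_enn2real measurable_pmf_nn_integral Suc
        measurable_compose[OF measurable_pmf_sum_iid[OF c] measurable_ennreal])
qed



definition G :: "nat pmf \<Rightarrow> real \<Rightarrow> ennreal" where
  "G q t = (\<integral>\<^sup>+i. ennreal (real i powr (-t)) \<partial>measure_pmf q)"

lemma young_step:
  fixes a b j s :: real
  assumes "a \<ge> 1" "b \<ge> j" "j \<ge> 1" "s \<ge> 0"
  shows "((a + b) / (j + 1)) powr (-s) \<le> a powr (-s / (j+1)) * (b / j) powr (-(s * j / (j+1)))"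
proof -
  have y: "a powr (1/(j+1)) * (b/j) powr (j/(j+1)) \<le> (1/(j+1)) * a + (j/(j+1)) * (b/j)"
    using assms by (intro Youngs_inequality_0) (auto simp: field_simps)
  have jn: "j \<noteq> 0" "j + 1 \<noteq> 0" using assms by auto
  have eq: "(1/(j+1)) * a + (j/(j+1)) * (b/j) = (a + b) / (j + 1)" using jn by (simp add: add_divide_distrib)
  have pos: "0 < a powr (1/(j+1)) * (b/j) powr (j/(j+1))" using assms by auto
  have "((a + b) / (j + 1)) powr (-s) \<le> (a powr (1/(j+1)) * (b/j) powr (j/(j+1))) powr (-s)"
    using y eq pos assms by (intro powr_mono2') auto
  also have "\<dots> = a powr (-s / (j+1)) * (b / j) powr (-(s * j / (j+1)))"
    using assms by (simp add: powr_mult powr_powr field_simps)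
  finally show ?thesis .
qed

lemma amgm_sum_iid:
  assumes q0: "0 \<notin> set_pmf q" and s: "s \<ge> 0"
  shows "(\<integral>\<^sup>+z. ennreal ((real z / real (Suc m)) powr (-s)) \<partial>measure_pmf (sum_iid q (Suc m)))
          \<le> G q (s / real (Suc m)) ^ Suc m"
  using s
proof (induction m arbitrary: s)
  case 0
  then show ?case by (simp add: G_def bind_return_pmf' map_pmf_def[symmetric])
next
  case (Suc m)
  define j where "j = real (Suc m)"
  have j1: "j \<ge> 1" by (simp add: j_def)
  have q1: "\<And>a. a \<in> set_pmf q \<Longrightarrow> real a \<ge> 1" using q0 by (metis less_one not_le of_nat_1 of_nat_le_iff)
  have sj: "\<And>b. b \<in> set_pmf (sum_iid q (Suc m)) \<Longrightarrow> real b \<ge> j"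
  proof -
    fix b assume "b \<in> set_pmf (sum_iid q (Suc m))"
    then have "b \<ge> Suc m" using sum_iid_support[OF q0, of "Suc m"] by blast
    then show "real b \<ge> j" unfolding j_def by simp
  qed
  have "(\<integral>\<^sup>+z. ennreal ((real z / real (Suc (Suc m))) powr (-s)) \<partial>measure_pmf (sum_iid q (Suc (Suc m))))
      = (\<integral>\<^sup>+a. \<integral>\<^sup>+b. ennreal (((real a + real b) / (j + 1)) powr (-s)) \<partial>measure_pmf (sum_iid q (Suc m)) \<partial>measure_pmf q)"
    by (subst sum_iid.simps(2)) (simp add: j_def add.commute del: sum_iid.simps)
  also have "\<dots> \<le> (\<integral>\<^sup>+a. \<integral>\<^sup>+b. ennreal (real a powr (-s / (j+1))) * ennreal ((real b / j) powr (-(s * j / (j+1)))) \<partial>measure_pmf (sum_iid q (Suc m)) \<partial>measure_pmf q)"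
    using Suc.prems j1
    apply (intro nn_integral_mono_AE)
    apply (simp only: AE_measure_pmf_iff)
    apply (intro ballI nn_integral_mono_AE)
    apply (simp only: AE_measure_pmf_iff)
    apply (intro ballI)
    apply (simp only: ennreal_mult''[symmetric] powr_ge_zero)
    apply (intro ennreal_leI young_step)
    using q1 sj by auto
  also have "\<dots> = (\<integral>\<^sup>+a. ennreal (real a powr (-s / (j+1))) \<partial>measure_pmf q) * (\<integral>\<^sup>+b. ennreal ((real b / j) powr (-(s * j / (j+1)))) \<partial>measure_pmf (sum_iid q (Suc m)))"
    by (simp add: nn_integral_cmult nn_integral_multc del: sum_iid.simps)
  also have "\<dots> \<le> G q (s / (j+1)) * G q ((s * j / (j+1)) / j) ^ Suc m"
    using Suc.IH[of "s * j / (j+1)"] Suc.prems j1 unfolding j_def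
    by (intro mult_mono) (auto simp: G_def simp del: sum_iid.simps)
  also have "(s * j / (j+1)) / j = s / (j+1)" using j1 by (simp add: divide_simps)
  finally show ?case by (simp add: j_def add.commute)
qed



definition g :: "nat pmf \<Rightarrow> real \<Rightarrow> real" where
  "g q t = measure_pmf.expectation q (\<lambda>i. real i powr (-t))"

lemma powr_neg_le1: "t \<ge> 0 \<Longrightarrow> real i powr (-t) \<le> 1"
proof (cases "i = 0")
  case False
  assume t: "t \<ge> 0"
  have "1 \<le> real i powr t" using False t by (intro ge_one_powr_ge_zero) auto
  then show ?thesis by (simp add: powr_minus inverse_le_1_iff)
qed auto

lemma integrable_powr_neg: "t \<ge> 0 \<Longrightarrow> integrable (measure_pmf q) (\<lambda>i. real i powr (-t))"
  by (rule measure_pmf.integrable_const_bound[where B=1]) (auto simp: powr_neg_le1)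

lemma g_nonneg: "0 \<le> g q t" unfolding g_def by (simp add: integral_nonneg_AE)

lemma g_le1: "t \<ge> 0 \<Longrightarrow> g q t \<le> 1"
proof -
  assume t: "t \<ge> 0"
  have "g q t \<le> measure_pmf.expectation q (\<lambda>i. 1::real)"
    unfolding g_def using t by (intro integral_mono integrable_powr_neg) (auto simp: powr_neg_le1)
  then show ?thesis by simp
qed

lemma G_eq_g: "t \<ge> 0 \<Longrightarrow> G q t = ennreal (g q t)"
  unfolding G_def g_def by (intro nn_integral_eq_integral integrable_powr_neg) auto

lemma power_mean:
  assumes q0: "0 \<notin> set_pmf q" and s: "s > 0" and k: "1 \<le> k" "k \<le> j"
  shows "g q (s / real j) ^ j \<le> g q (s / real k) ^ k"
proof -
  define a where "a = s / real j"
  define r where "r = real j / real k"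
  have a: "a > 0" using s k by (simp add: a_def)
  have r: "r \<ge> 1" using k by (simp add: r_def)
  have ar: "a * r = s / real k" using k by (simp add: a_def r_def)
  have q1: "\<And>i. i \<in> set_pmf q \<Longrightarrow> real i > 0" using q0 by (metis gr0I of_nat_0_less_iff)
  have J: "(g q a) powr r \<le> measure_pmf.expectation q (\<lambda>i. (real i powr (-a)) powr r)"
    unfolding g_def
  proof (rule measure_pmf.jensens_inequality[where I="{0<..}" and a=0])
    show "integrable (measure_pmf q) (\<lambda>i. real i powr - a)" using a by (intro integrable_powr_neg) auto
    show "AE x in measure_pmf q. real x powr - a \<in> {0<..}" using q1 by (auto simp: AE_measure_pmf_iff)
    show "integrable (measure_pmf q) (\<lambda>x. (real x powr - a) powr r)"
      using a r by (simp add: powr_powr) (intro integrable_powr_neg, simp)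
    show "convex_on {0<..} (\<lambda>x. x powr r)" using r by (rule powr_convex)
  qed simp
  have "measure_pmf.expectation q (\<lambda>i. (real i powr (-a)) powr r) = g q (s / real k)"
    unfolding g_def using ar by (simp add: powr_powr)
  with J have J': "(g q a) powr r \<le> g q (s / real k)" by simp
  show ?thesis
  proof (cases "g q a = 0")
    case True
    have "0 \<le> g q (s / real k) ^ k" by (simp add: g_nonneg)
    moreover have "j \<noteq> 0" using k by simp
    ultimately show ?thesis using True by (simp add: a_def zero_power)
  next
    case False
    then have gp: "g q a > 0" using g_nonneg[of q a] by simp
    have "g q a ^ j = ((g q a) powr r) ^ k"
    proof -
      have "g q a ^ j = g q a powr (real j)" using gp by (simp add: powr_realpow)
      also have "real j = r * real k" using k by (simp add: r_def)
      also have "g q a powr (r * real k) = ((g q a) powr r) powr (real k)" by (simp add: powr_powr)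
      also have "\<dots> = ((g q a) powr r) ^ k" using gp by (simp add: powr_realpow)
      finally show ?thesis .
    qed
    also have "\<dots> \<le> g q (s / real k) ^ k" using J' by (intro power_mono) auto
    finally show ?thesis by (simp add: a_def)
  qed
qed



lemma one_step:
  assumes q0: "0 \<notin> set_pmf q" and s: "s > 0" and k: "1 \<le> k" "k \<le> j"
  shows "(\<integral>\<^sup>+z. ennreal (real z powr (-s)) \<partial>measure_pmf (sum_iid q j))
          \<le> ennreal (real j powr (-s)) * ennreal (g q (s / real k) ^ k)"
proof -
  obtain m where m: "j = Suc m" using k by (cases j) auto
  have jp: "real j > 0" using k by simp
  have "(\<integral>\<^sup>+z. ennreal (real z powr (-s)) \<partial>measure_pmf (sum_iid q j))
      = (\<integral>\<^sup>+z. ennreal (real j powr (-s)) * ennreal ((real z / real j) powr (-s)) \<partial>measure_pmf (sum_iid q j))"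
  proof (intro nn_integral_cong)
    fix z
    have "real j powr (-s) > 0" using jp by simp
    then have "real z powr (-s) = real j powr (-s) * (real z / real j) powr (-s)"
      by (simp add: powr_divide)
    then show "ennreal (real z powr (-s)) = ennreal (real j powr (-s)) * ennreal ((real z / real j) powr (-s))"
      by (simp add: ennreal_mult''[symmetric])
  qed
  also have "\<dots> = ennreal (real j powr (-s)) * (\<integral>\<^sup>+z. ennreal ((real z / real j) powr (-s)) \<partial>measure_pmf (sum_iid q j))"
    by (simp add: nn_integral_cmult)
  also have "\<dots> \<le> ennreal (real j powr (-s)) * G q (s / real j) ^ j"
    using amgm_sum_iid[OF q0, of s m] s m by (intro mult_left_mono) auto
  also have "G q (s / real j) ^ j = ennreal (g q (s / real j) ^ j)"
    using s by (simp add: G_eq_g ennreal_power g_nonneg)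
  also have "\<dots> \<le> ennreal (g q (s / real k) ^ k)"
    by (intro ennreal_leI power_mean[OF q0 s k])
  finally show ?thesis by (simp add: mult_left_mono)
qed

lemma nn_integral_pmf_swap:
  fixes Q :: "nat pmf"
  assumes "\<And>l. (\<lambda>x. h x l) \<in> borel_measurable N"
  shows "(\<integral>\<^sup>+x. \<integral>\<^sup>+l. h x l \<partial>measure_pmf Q \<partial>N) = (\<integral>\<^sup>+l. \<integral>\<^sup>+x. h x l \<partial>N \<partial>measure_pmf Q)"
proof -
  have "(\<integral>\<^sup>+x. \<integral>\<^sup>+l. h x l \<partial>measure_pmf Q \<partial>N) = (\<integral>\<^sup>+x. (\<Sum>l. ennreal (pmf Q l) * h x l) \<partial>N)"
    by (simp add: nn_integral_measure_pmf nn_integral_count_space_nat)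
  also have "\<dots> = (\<Sum>l. \<integral>\<^sup>+x. ennreal (pmf Q l) * h x l \<partial>N)"
    using assms by (intro nn_integral_suminf) measurable
  also have "\<dots> = (\<Sum>l. ennreal (pmf Q l) * \<integral>\<^sup>+x. h x l \<partial>N)"
    using assms by (simp add: nn_integral_cmult)
  also have "\<dots> = (\<integral>\<^sup>+l. \<integral>\<^sup>+x. h x l \<partial>N \<partial>measure_pmf Q)"
    by (simp add: nn_integral_measure_pmf nn_integral_count_space_nat)
  finally show ?thesis .
qed

lemma measurable_u:
  assumes "\<And>i. (\<lambda>e. pmf (p e) i) \<in> borel_measurable M"
  shows "(\<lambda>xi. \<integral>\<^sup>+z. f z \<partial>measure_pmf (quenched_law p xi j n)) \<in> borel_measurable (PiM UNIV (\<lambda>_::nat. M))"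
  by (intro measurable_pmf_nn_integral measurable_pmf_quenched assms) simp



lemma nn_integral_pmf_single_le:
  "ennreal (pmf Q a) * f a \<le> (\<integral>\<^sup>+l. f l \<partial>measure_pmf Q)"
proof -
  have "(\<integral>\<^sup>+l. f a * indicator {a} l \<partial>measure_pmf Q) \<le> (\<integral>\<^sup>+l. f l \<partial>measure_pmf Q)"
    by (intro nn_integral_mono) (auto split: split_indicator)
  moreover have "(\<integral>\<^sup>+l. f a * indicator {a} l \<partial>measure_pmf Q) = f a * ennreal (pmf Q a)"
    by (simp add: nn_integral_cmult_indicator emeasure_pmf_single)
  ultimately show ?thesis by (simp add: mult.commute)
qed

lemma pmf_sum_iid_diag: "pmf q 1 ^ j \<le> pmf (sum_iid q j) j"
proof (induction j)
  case 0 then show ?case by simp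
next
  case (Suc j)
  have "ennreal (pmf q 1 ^ Suc j) = ennreal (pmf q 1) * ennreal (pmf q 1 ^ j)"
    by (simp add: ennreal_mult'' pmf_nonneg)
  also have "\<dots> \<le> ennreal (pmf q 1) * ennreal (pmf (map_pmf (\<lambda>b. 1 + b) (sum_iid q j)) (Suc j))"
    using Suc by (intro mult_left_mono ennreal_leI) (simp only: pmf_map_add, simp_all)
  also have "\<dots> \<le> (\<integral>\<^sup>+a. pmf (map_pmf (\<lambda>b. a + b) (sum_iid q j)) (Suc j) \<partial>measure_pmf q)"
    by (rule nn_integral_pmf_single_le[where f="\<lambda>a. ennreal (pmf (map_pmf (\<lambda>b. a + b) (sum_iid q j)) (Suc j))"])
  also have "\<dots> = ennreal (pmf (sum_iid q (Suc j)) (Suc j))"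
    by (simp add: ennreal_pmf_bind del: pmf_map)
  finally show ?case by (simp add: pmf_nonneg)
qed

lemma measurable_g:
  assumes pm: "\<And>i. (\<lambda>e. pmf (p e) i) \<in> borel_measurable M" and t: "t \<ge> 0"
  shows "(\<lambda>e. g (p e) t) \<in> borel_measurable M"
proof -
  have "(\<lambda>e. g (p e) t) = (\<lambda>e. enn2real (G (p e) t))" using t by (simp add: G_eq_g g_nonneg)
  also have "\<dots> \<in> borel_measurable M" unfolding G_def
    by (intro borel_measurable_enn2real measurable_pmf_nn_integral pm) simp
  finally show ?thesis .
qed

context prob_space begin

lemma iter_upper:
  assumes pm: "\<And>i. (\<lambda>e. pmf (p e) i) \<in> borel_measurable M"
   and good: "AE e in M. 0 \<notin> set_pmf (p e)" and s: "s > 0" and k: "1 \<le> k"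
  shows "k \<le> j \<Longrightarrow> (\<integral>\<^sup>+xi. \<integral>\<^sup>+z. ennreal (real z powr (-s)) \<partial>measure_pmf (quenched_law p xi j n) \<partial>PiM UNIV (\<lambda>_::nat. M))
     \<le> ennreal (real j powr (-s)) * (\<integral>\<^sup>+e. ennreal (g (p e) (s / real k) ^ k) \<partial>M) ^ n"
proof (induction n arbitrary: j)
  interpret S: prob_space "PiM UNIV (\<lambda>_::nat. M)" by (intro prob_space_PiM prob_space_axioms)
  case 0
  then show ?case by (simp add: S.emeasure_space_1)
next
  interpret S: prob_space "PiM UNIV (\<lambda>_::nat. M)" by (intro prob_space_PiM prob_space_axioms)
  case (Suc n)
  let ?S = "PiM UNIV (\<lambda>_::nat. M)"
  let ?U = "\<lambda>n xi j. \<integral>\<^sup>+z. ennreal (real z powr (-s)) \<partial>measure_pmf (quenched_law p xi j n)"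
  let ?R = "\<integral>\<^sup>+e. ennreal (g (p e) (s / real k) ^ k) \<partial>M"
  have "(\<integral>\<^sup>+xi. ?U (Suc n) xi j \<partial>?S) = (\<integral>\<^sup>+e. \<integral>\<^sup>+\<omega>. ?U (Suc n) (case_nat e \<omega>) j \<partial>?S \<partial>M)"
    by (intro nn_integral_PiM_split measurable_u pm)
  also have "\<dots> = (\<integral>\<^sup>+e. \<integral>\<^sup>+\<omega>. \<integral>\<^sup>+l. ?U n \<omega> l \<partial>measure_pmf (sum_iid (p e) j) \<partial>?S \<partial>M)"
    by (simp only: quenched_shift nn_integral_bind_pmf)
  also have "\<dots> = (\<integral>\<^sup>+e. \<integral>\<^sup>+l. \<integral>\<^sup>+\<omega>. ?U n \<omega> l \<partial>?S \<partial>measure_pmf (sum_iid (p e) j) \<partial>M)"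
    by (intro nn_integral_cong nn_integral_pmf_swap measurable_u pm)
  also have "\<dots> \<le> (\<integral>\<^sup>+e. \<integral>\<^sup>+l. ennreal (real l powr (-s)) * ?R ^ n \<partial>measure_pmf (sum_iid (p e) j) \<partial>M)"
  proof (intro nn_integral_mono_AE)
    show "AE e in M. (\<integral>\<^sup>+l. \<integral>\<^sup>+\<omega>. ?U n \<omega> l \<partial>?S \<partial>measure_pmf (sum_iid (p e) j))
        \<le> (\<integral>\<^sup>+l. ennreal (real l powr (-s)) * ?R ^ n \<partial>measure_pmf (sum_iid (p e) j))"
      using good
    proof eventually_elim
      case (elim e)
      show ?case
      proof (intro nn_integral_mono_AE)
        show "AE l in measure_pmf (sum_iid (p e) j). (\<integral>\<^sup>+\<omega>. ?U n \<omega> l \<partial>?S) \<le> ennreal (real l powr (-s)) * ?R ^ n"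
          unfolding AE_measure_pmf_iff
        proof
          fix l assume "l \<in> set_pmf (sum_iid (p e) j)"
          then have "l \<ge> j" using sum_iid_support[OF elim] by blast
          then show "(\<integral>\<^sup>+\<omega>. ?U n \<omega> l \<partial>?S) \<le> ennreal (real l powr (-s)) * ?R ^ n"
            using Suc.IH Suc.prems by auto
        qed
      qed
    qed
  qed
  also have "\<dots> = (\<integral>\<^sup>+e. (\<integral>\<^sup>+l. ennreal (real l powr (-s)) \<partial>measure_pmf (sum_iid (p e) j)) * ?R ^ n \<partial>M)"
    by (simp add: nn_integral_multc)
  also have "\<dots> \<le> (\<integral>\<^sup>+e. ennreal (real j powr (-s)) * ?R ^ n * ennreal (g (p e) (s / real k) ^ k) \<partial>M)"
  proof (intro nn_integral_mono_AE)
    show "AE e in M. (\<integral>\<^sup>+l. ennreal (real l powr (-s)) \<partial>measure_pmf (sum_iid (p e) j)) * ?R ^ n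
        \<le> ennreal (real j powr (-s)) * ?R ^ n * ennreal (g (p e) (s / real k) ^ k)"
      using good
    proof eventually_elim
      case (elim e)
      have "(\<integral>\<^sup>+l. ennreal (real l powr (-s)) \<partial>measure_pmf (sum_iid (p e) j)) * ?R ^ n
         \<le> (ennreal (real j powr (-s)) * ennreal (g (p e) (s / real k) ^ k)) * ?R ^ n"
        using one_step[OF elim s k Suc.prems] by (intro mult_right_mono) auto
      then show ?case by (simp add: ac_simps)
    qed
  qed
  also have "\<dots> = ennreal (real j powr (-s)) * ?R ^ n * ?R"
  proof -
    have "(\<lambda>e. g (p e) (s / real k)) \<in> borel_measurable M" using s k by (intro measurable_g[OF pm]) auto
    then show ?thesis by (intro nn_integral_cmult) measurable
  qed
  also have "\<dots> = ennreal (real j powr (-s)) * ?R ^ Suc n" by (simp add: ac_simps)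
  finally show ?case .
qed

lemma iter_lower:
  assumes pm: "\<And>i. (\<lambda>e. pmf (p e) i) \<in> borel_measurable M"
  shows "(\<integral>\<^sup>+e. ennreal (pmf (p e) 1 ^ k) \<partial>M) ^ n \<le> (\<integral>\<^sup>+xi. ennreal (pmf (quenched_law p xi k n) k) \<partial>PiM UNIV (\<lambda>_::nat. M))"
proof (induction n)
  interpret S: prob_space "PiM UNIV (\<lambda>_::nat. M)" by (intro prob_space_PiM prob_space_axioms)
  case 0
  then show ?case by (simp add: S.emeasure_space_1)
next
  case (Suc n)
  let ?S = "PiM UNIV (\<lambda>_::nat. M)"
  let ?V = "\<lambda>xi. ennreal (pmf (quenched_law p xi k n) k)"
  let ?R = "\<integral>\<^sup>+e. ennreal (pmf (p e) 1 ^ k) \<partial>M"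
  have mV: "?V \<in> borel_measurable ?S" using measurable_pmf_quenched[OF pm] by measurable
  have "?R ^ Suc n = (\<integral>\<^sup>+e. ennreal (pmf (p e) 1 ^ k) * ?R ^ n \<partial>M)"
  proof -
    have "?R ^ Suc n = ?R * ?R ^ n" by simp
    also have "\<dots> = (\<integral>\<^sup>+e. ennreal (pmf (p e) 1 ^ k) * ?R ^ n \<partial>M)"
      by (rule nn_integral_multc[symmetric]) (use pm in measurable)
    finally show ?thesis .
  qed
  also have "\<dots> \<le> (\<integral>\<^sup>+e. ennreal (pmf (p e) 1 ^ k) * (\<integral>\<^sup>+\<omega>. ?V \<omega> \<partial>?S) \<partial>M)"
    using Suc by (intro nn_integral_mono mult_left_mono) auto
  also have "\<dots> = (\<integral>\<^sup>+e. \<integral>\<^sup>+\<omega>. ennreal (pmf (p e) 1 ^ k) * ?V \<omega> \<partial>?S \<partial>M)"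
    using mV by (simp add: nn_integral_cmult)
  also have "\<dots> \<le> (\<integral>\<^sup>+e. \<integral>\<^sup>+\<omega>. ennreal (pmf (quenched_law p (case_nat e \<omega>) k (Suc n)) k) \<partial>?S \<partial>M)"
  proof (intro nn_integral_mono)
    fix e \<omega>
    have "ennreal (pmf (p e) 1 ^ k) * ?V \<omega> \<le> ennreal (pmf (sum_iid (p e) k) k) * ?V \<omega>"
      by (intro mult_right_mono ennreal_leI pmf_sum_iid_diag) auto
    also have "\<dots> \<le> (\<integral>\<^sup>+l. ennreal (pmf (quenched_law p \<omega> l n) k) \<partial>measure_pmf (sum_iid (p e) k))"
      by (rule nn_integral_pmf_single_le[where f="\<lambda>l. ennreal (pmf (quenched_law p \<omega> l n) k)"])
    also have "\<dots> = ennreal (pmf (quenched_law p (case_nat e \<omega>) k (Suc n)) k)"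
      by (simp only: quenched_shift ennreal_pmf_bind)
    finally show "ennreal (pmf (p e) 1 ^ k) * ?V \<omega> \<le> ennreal (pmf (quenched_law p (case_nat e \<omega>) k (Suc n)) k)" .
  qed
  also have "\<dots> = (\<integral>\<^sup>+xi. ennreal (pmf (quenched_law p xi k (Suc n)) k) \<partial>?S)"
    by (rule nn_integral_PiM_split[symmetric]) (use measurable_pmf_quenched[OF pm] in measurable)
  finally show ?case .
qed

end



lemma finite_le_real: "finite {z::nat. real z \<le> x}"
  by (rule finite_subset[where B="{..nat \<lceil>x\<rceil>}"]) (auto, linarith)

lemma prob_quenched_eq:
  "measure_pmf.prob Q {z::nat. real z \<le> x} = (\<Sum>z\<in>{z. real z \<le> x}. pmf Q z)"
  by (rule measure_measure_pmf_finite[OF finite_le_real])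

lemma measurable_prob_quenched:
  assumes pm: "\<And>i. (\<lambda>e. pmf (p e) i) \<in> borel_measurable M"
  shows "(\<lambda>xi. measure_pmf.prob (quenched_law p xi k n) {z. real z \<le> x}) \<in> borel_measurable (PiM UNIV (\<lambda>_::nat. M))"
  unfolding prob_quenched_eq by (intro borel_measurable_sum measurable_pmf_quenched pm)

context prob_space begin

lemma AE_good:
  assumes "AE e in M. 0 \<notin> set_pmf (p e)"
  shows "AE xi in PiM UNIV (\<lambda>_::nat. M). \<forall>i. 0 \<notin> set_pmf (p (xi i))"
  unfolding AE_all_countable
  using assms by (intro allI AE_PiM_component) (auto intro: prob_space_axioms)

lemma nn_R:
  assumes pm: "\<And>i. (\<lambda>e. pmf (p e) i) \<in> borel_measurable M" and t: "t \<ge> 0"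
  shows "(\<integral>\<^sup>+e. ennreal (g (p e) t ^ k) \<partial>M) = ennreal (\<integral>e. g (p e) t ^ k \<partial>M)"
proof -
  have m: "(\<lambda>e. g (p e) t ^ k) \<in> borel_measurable M" using measurable_g[OF pm t] by measurable
  show ?thesis
    by (intro nn_integral_eq_integral integrable_const_bound[where B=1])
       (use m t in \<open>auto simp: g_nonneg g_le1 power_le_one\<close>)
qed

lemma annealed_upper:
  assumes pm: "\<And>i. (\<lambda>e. pmf (p e) i) \<in> borel_measurable M"
   and good: "AE e in M. 0 \<notin> set_pmf (p e)" and s: "s > 0" and k: "1 \<le> k" and x: "x > 0"
  shows "annealed_prob M p k n {z. real z \<le> x} \<le> x powr s * real k powr (-s) * (\<integral>e. g (p e) (s / real k) ^ k \<partial>M) ^ n"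
proof -
  let ?S = "PiM UNIV (\<lambda>_::nat. M)"
  let ?P = "\<lambda>xi. measure_pmf.prob (quenched_law p xi k n) {z. real z \<le> x}"
  let ?U = "\<lambda>xi. \<integral>\<^sup>+z. ennreal (real z powr (-s)) \<partial>measure_pmf (quenched_law p xi k n)"
  let ?r = "\<integral>e. g (p e) (s / real k) ^ k \<partial>M"
  have r0: "0 \<le> ?r" by (intro integral_nonneg_AE) (auto simp: g_nonneg)
  have A: "annealed_prob M p k n {z. real z \<le> x} = enn2real (\<integral>\<^sup>+xi. ennreal (?P xi) \<partial>?S)"
    unfolding annealed_prob_def by (intro integral_eq_nn_integral measurable_prob_quenched pm) auto
  have "(\<integral>\<^sup>+xi. ennreal (?P xi) \<partial>?S) \<le> (\<integral>\<^sup>+xi. ennreal (x powr s) * ?U xi \<partial>?S)"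
  proof (intro nn_integral_mono_AE)
    show "AE xi in ?S. ennreal (?P xi) \<le> ennreal (x powr s) * ?U xi"
      using AE_good[OF good]
    proof eventually_elim
      case (elim xi)
      have sup: "\<And>z. z \<in> set_pmf (quenched_law p xi k n) \<Longrightarrow> z \<ge> k"
        using quenched_support[of p xi k n] elim by blast
      have "ennreal (?P xi) = (\<integral>\<^sup>+z. indicator {z. real z \<le> x} z \<partial>measure_pmf (quenched_law p xi k n))"
        by (simp add: measure_pmf.emeasure_eq_measure[symmetric])
      also have "\<dots> \<le> (\<integral>\<^sup>+z. ennreal (x powr s) * ennreal (real z powr (-s)) \<partial>measure_pmf (quenched_law p xi k n))"
      proof (intro nn_integral_mono_AE)
        show "AE z in measure_pmf (quenched_law p xi k n). indicator {z. real z \<le> x} z \<le> ennreal (x powr s) * ennreal (real z powr (-s))"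
          unfolding AE_measure_pmf_iff
        proof
          fix z assume "z \<in> set_pmf (quenched_law p xi k n)"
          then have z1: "real z \<ge> 1" using sup k by fastforce
          show "indicator {z. real z \<le> x} z \<le> ennreal (x powr s) * ennreal (real z powr (-s))"
          proof (cases "real z \<le> x")
            case True
            have "1 \<le> (x / real z) powr s" using True z1 s by (intro ge_one_powr_ge_zero) auto
            also have "(x / real z) powr s = x powr s * real z powr (-s)"
              using z1 x by (subst powr_divide) (simp_all add: powr_minus divide_inverse)
            finally show ?thesis using True by (simp add: ennreal_mult''[symmetric])
          qed simp
        qed
      qed
      also have "\<dots> = ennreal (x powr s) * ?U xi" by (simp add: nn_integral_cmult)
      finally show ?case .
    qed
  qed
  also have "\<dots> = ennreal (x powr s) * (\<integral>\<^sup>+xi. ?U xi \<partial>?S)"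
    by (intro nn_integral_cmult measurable_u pm)
  also have "\<dots> \<le> ennreal (x powr s) * (ennreal (real k powr (-s)) * ennreal ?r ^ n)"
    using iter_upper[OF pm good s k order.refl, of n] nn_R[OF pm, of "s / real k" k] s
    by (intro mult_left_mono) auto
  also have "\<dots> = ennreal (x powr s * real k powr (-s) * ?r ^ n)"
    using r0 by (simp add: ennreal_mult'' ennreal_power ac_simps)
  finally have "(\<integral>\<^sup>+xi. ennreal (?P xi) \<partial>?S) \<le> ennreal (x powr s * real k powr (-s) * ?r ^ n)" .
  then show ?thesis
    unfolding A using r0 by (intro enn2real_leI) auto
qed

end


lemma powr_neg_lim:
  assumes k: "k \<ge> (1::nat)"
  shows "(\<lambda>m. real i powr (-(real m / real k))) \<longlonglongrightarrow> indicator {1} i"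
proof (cases "i \<le> 1")
  case True
  then consider "i = 0" | "i = 1" by linarith
  then show ?thesis by cases auto
next
  case False
  define c where "c = real i powr (-1 / real k)"
  have c0: "0 < c" using False by (simp add: c_def)
  have c1: "c < 1" unfolding c_def using False k by (intro powr_less_one) auto
  have eq: "\<And>m. real i powr (-(real m / real k)) = c ^ m"
  proof -
    fix m
    have "real i powr (-(real m / real k)) = (real i powr (-1 / real k)) powr real m"
      by (simp add: powr_powr)
    also have "\<dots> = c ^ m" using c0 by (simp add: c_def powr_realpow)
    finally show "real i powr (-(real m / real k)) = c ^ m" .
  qed
  have "(\<lambda>m. c ^ m) \<longlonglongrightarrow> 0" using c0 c1 by (intro LIMSEQ_power_zero) auto
  then show ?thesis using False by (simp add: eq)
qed

lemma g_lim:
  assumes k: "k \<ge> (1::nat)"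
  shows "(\<lambda>m. g q (real m / real k)) \<longlonglongrightarrow> pmf q 1"
proof -
  have "(\<lambda>m. measure_pmf.expectation q (\<lambda>i. real i powr (-(real m / real k)))) \<longlonglongrightarrow> measure_pmf.expectation q (indicator {1})"
  proof (rule integral_dominated_convergence[where w="\<lambda>_. 1"])
    show "AE x in measure_pmf q. (\<lambda>m. real x powr (-(real m / real k))) \<longlonglongrightarrow> indicator {1} x"
      using powr_neg_lim[OF k] by simp
    show "\<And>m. AE x in measure_pmf q. norm (real x powr (-(real m / real k))) \<le> 1"
      by (auto simp: powr_neg_le1)
  qed auto
  then show ?thesis by (simp add: g_def measure_pmf_single)
qed

context prob_space begin

lemma rho_lim:
  assumes pm: "\<And>i. (\<lambda>e. pmf (p e) i) \<in> borel_measurable M" and k: "k \<ge> (1::nat)"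
  shows "(\<lambda>m. \<integral>e. g (p e) (real m / real k) ^ k \<partial>M) \<longlonglongrightarrow> gamma_k M p k"
  unfolding gamma_k_def
proof (rule integral_dominated_convergence[where w="\<lambda>_. 1"])
  show "AE x in M. (\<lambda>m. g (p x) (real m / real k) ^ k) \<longlonglongrightarrow> pmf (p x) 1 ^ k"
    using g_lim[OF k] by (auto intro!: tendsto_power)
  show "\<And>m. AE x in M. norm (g (p x) (real m / real k) ^ k) \<le> 1"
    by (auto simp: g_nonneg g_le1 power_le_one)
  show "\<And>m. (\<lambda>x. g (p x) (real m / real k) ^ k) \<in> borel_measurable M"
    using measurable_g[OF pm] by measurable
  show "(\<lambda>x. pmf (p x) 1 ^ k) \<in> borel_measurable M" using pm by measurable
qed auto

lemma annealed_lower: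
  assumes pm: "\<And>i. (\<lambda>e. pmf (p e) i) \<in> borel_measurable M" and x: "real k \<le> x"
  shows "gamma_k M p k ^ n \<le> annealed_prob M p k n {z. real z \<le> x}"
proof -
  interpret S: prob_space "PiM UNIV (\<lambda>_::nat. M)" by (intro prob_space_PiM prob_space_axioms)
  let ?S = "PiM UNIV (\<lambda>_::nat. M)"
  let ?P = "\<lambda>xi. measure_pmf.prob (quenched_law p xi k n) {z. real z \<le> x}"
  have A: "annealed_prob M p k n {z. real z \<le> x} = enn2real (\<integral>\<^sup>+xi. ennreal (?P xi) \<partial>?S)"
    unfolding annealed_prob_def by (intro integral_eq_nn_integral measurable_prob_quenched pm) auto
  have g0: "0 \<le> gamma_k M p k" unfolding gamma_k_def by (intro integral_nonneg_AE) auto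
  have G: "(\<integral>\<^sup>+e. ennreal (pmf (p e) 1 ^ k) \<partial>M) = ennreal (gamma_k M p k)"
    unfolding gamma_k_def
    by (intro nn_integral_eq_integral integrable_const_bound[where B=1])
       (use pm in \<open>auto simp: power_le_one pmf_le_1\<close>)
  have "ennreal (gamma_k M p k ^ n) \<le> (\<integral>\<^sup>+xi. ennreal (pmf (quenched_law p xi k n) k) \<partial>?S)"
    using iter_lower[OF pm, of k n] G g0 by (simp add: ennreal_power)
  also have "\<dots> \<le> (\<integral>\<^sup>+xi. ennreal (?P xi) \<partial>?S)"
  proof (intro nn_integral_mono ennreal_leI)
    fix xi
    have "pmf (quenched_law p xi k n) k = measure_pmf.prob (quenched_law p xi k n) {k}"
      by (simp add: measure_pmf_single)
    also have "\<dots> \<le> ?P xi" using x by (intro measure_pmf.finite_measure_mono) auto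
    finally show "pmf (quenched_law p xi k n) k \<le> ?P xi" .
  qed
  finally have le: "ennreal (gamma_k M p k ^ n) \<le> (\<integral>\<^sup>+xi. ennreal (?P xi) \<partial>?S)" .
  have "(\<integral>\<^sup>+xi. ennreal (?P xi) \<partial>?S) \<le> (\<integral>\<^sup>+xi. 1 \<partial>?S)"
    by (intro nn_integral_mono) auto
  also have "(\<integral>\<^sup>+xi. 1 \<partial>?S) = 1" by (simp add: S.emeasure_space_1)
  finally have le1: "(\<integral>\<^sup>+xi. ennreal (?P xi) \<partial>?S) \<le> 1" .
  have fin: "(\<integral>\<^sup>+xi. ennreal (?P xi) \<partial>?S) < top"
    using le1 by (rule le_less_trans) simp
  show ?thesis unfolding A
    using enn2real_mono[OF le fin] g0 by simp
qed

end


theorem corollary2p4: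
  fixes M :: "'e measure" and p :: "'e \<Rightarrow> nat pmf"
    and k :: nat and r \<epsilon> :: real and kn :: "nat \<Rightarrow> real"
  assumes M: "prob_space M"
    and p_meas: "\<And>i. (\<lambda>e. pmf (p e) i) \<in> borel_measurable M"
    and p0: "AE e in M. pmf (p e) 0 = 0"
    and mean_fin: "AE e in M. integrable (measure_pmf (p e)) real"
    and logm_int: "integrable M (\<lambda>e. ln (mean_offspring p e))"
    and logm_pos: "(\<integral>e. ln (mean_offspring p e) \<partial>M) > 0"
    and LlogL: "(\<integral>\<^sup>+ e. (\<integral>\<^sup>+ i. ennreal (real i / mean_offspring p e * max 0 (ln (real i))) \<partial>measure_pmf (p e)) \<partial>M) < \<infinity>"
    and p1: "measure M {e \<in> space M. 0 < pmf (p e) 1} > 0"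
    and r_pos: "r > 0"
    and r_def: "(\<integral>e. mean_offspring p e powr (- r) \<partial>M) = gamma_k M p k"
    and k: "k \<ge> 1"
    and eps: "\<epsilon> > 0"
    and moment: "integrable M (\<lambda>e. mean_offspring p e powr (r + \<epsilon>))"
    and kn_pos: "\<And>n. kn n > 0"
    and kn_inf: "filterlim kn at_top sequentially"
    and kn_sub: "\<And>\<theta>. \<theta> > 0 \<Longrightarrow> (\<lambda>n. kn n / exp (\<theta> * real n)) \<longlonglongrightarrow> 0"
  shows "(\<lambda>n. ln (annealed_prob M p k n {z. real z \<le> kn n}) / real n)
           \<longlonglongrightarrow> ln (gamma_k M p k)"
proof -
  interpret prob_space M by (rule M)
  define \<gamma> where "\<gamma> = gamma_k M p k"
  define A where "A n = annealed_prob M p k n {z. real z \<le> kn n}" for n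
  define \<rho> where "\<rho> m = (\<integral>e. g (p e) (real m / real k) ^ k \<partial>M)" for m :: nat
  have good: "AE e in M. 0 \<notin> set_pmf (p e)" using p0 by eventually_elim (simp add: set_pmf_iff)
  have g0: "0 \<le> \<gamma>" unfolding \<gamma>_def gamma_k_def by (intro integral_nonneg_AE) auto
  have gpos: "\<gamma> > 0"
  proof (rule ccontr)
    assume "\<not> \<gamma> > 0"
    then have "\<gamma> = 0" using g0 by simp
    moreover have "integrable M (\<lambda>e. pmf (p e) 1 ^ k)"
      by (intro integrable_const_bound[where B=1]) (use p_meas in \<open>auto simp: power_le_one pmf_le_1\<close>)
    ultimately have "AE e in M. pmf (p e) 1 ^ k = 0"
      unfolding \<gamma>_def gamma_k_def by (subst (asm) integral_nonneg_eq_0_iff_AE) auto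
    then have "AE e in M. \<not> 0 < pmf (p e) 1" by eventually_elim auto
    then have "emeasure M {e \<in> space M. 0 < pmf (p e) 1} = 0"
      by (subst (asm) AE_iff_measurable[OF _ refl]) (use p_meas in auto)
    then show False using p1 by (simp add: measure_def)
  qed
  have lower: "\<forall>\<^sub>F n in sequentially. \<gamma> ^ n \<le> A n"
  proof -
    have "\<forall>\<^sub>F n in sequentially. real k \<le> kn n" using kn_inf by (simp add: filterlim_at_top)
    then show ?thesis unfolding A_def \<gamma>_def by eventually_elim (rule annealed_lower[OF p_meas])
  qed
  have upper: "\<And>m n. m \<ge> 1 \<Longrightarrow> A n \<le> kn n powr real m * real k powr (- real m) * \<rho> m ^ n"
    unfolding A_def \<rho>_def using k kn_pos by (intro annealed_upper[OF p_meas good]) auto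
  have rho_lim': "\<rho> \<longlonglongrightarrow> \<gamma>" unfolding \<rho>_def \<gamma>_def by (rule rho_lim[OF p_meas k])
  show ?thesis
    unfolding A_def[symmetric] \<gamma>_def[symmetric]
  proof (rule tendstoI)
    fix \<epsilon>' :: real assume e: "\<epsilon>' > 0"
    have "(\<lambda>m. ln (\<rho> m)) \<longlonglongrightarrow> ln \<gamma>" using rho_lim' gpos by (intro tendsto_ln) auto
    then have ev1: "\<forall>\<^sub>F m in sequentially. ln (\<rho> m) < ln \<gamma> + \<epsilon>' / 2"
      using e by (intro order_tendstoD) auto
    have ev2: "\<forall>\<^sub>F m in sequentially. \<rho> m > 0" using rho_lim' gpos by (intro order_tendstoD) auto
    have ev3: "\<forall>\<^sub>F m in sequentially. m \<ge> (1::nat)" by (rule eventually_ge_at_top)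
    have "\<forall>\<^sub>F m in sequentially. ln (\<rho> m) < ln \<gamma> + \<epsilon>' / 2 \<and> \<rho> m > 0 \<and> m \<ge> 1"
      using ev1 ev2 ev3 by eventually_elim auto
    then obtain N where "\<forall>m\<ge>N. ln (\<rho> m) < ln \<gamma> + \<epsilon>' / 2 \<and> \<rho> m > 0 \<and> m \<ge> 1"
      unfolding eventually_sequentially by blast
    then obtain m where m1: "m \<ge> 1" and rm: "ln (\<rho> m) < ln \<gamma> + \<epsilon>' / 2" and rp: "\<rho> m > 0"
      by blast
    define \<theta> where "\<theta> = \<epsilon>' / (4 * real m)"
    have th: "\<theta> > 0" using e m1 by (simp add: \<theta>_def)
    have "\<forall>\<^sub>F n in sequentially. kn n / exp (\<theta> * real n) < 1"
      using kn_sub[OF th] by (intro order_tendstoD) auto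
    then have ev4: "\<forall>\<^sub>F n in sequentially. ln (kn n) < \<theta> * real n"
    proof eventually_elim
      case (elim n)
      then have "kn n < exp (\<theta> * real n)" by (simp add: divide_less_eq)
      then have "ln (kn n) < ln (exp (\<theta> * real n))"
        using kn_pos[of n] by (subst ln_less_cancel_iff) auto
      then show ?case by simp
    qed
    show "\<forall>\<^sub>F n in sequentially. dist (ln (A n) / real n) (ln \<gamma>) < \<epsilon>'"
      using lower ev4 eventually_ge_at_top[of 1]
    proof eventually_elim
      case (elim n)
      have n0: "real n > 0" using elim by simp
      have Apos: "A n > 0" using elim(1) gpos by (meson less_le_trans zero_less_power)
      have lo: "ln \<gamma> \<le> ln (A n) / real n"
      proof -
        have "real n * ln \<gamma> = ln (\<gamma> ^ n)" using gpos by (simp add: ln_realpow)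
        also have "\<dots> \<le> ln (A n)" using elim(1) gpos by (intro ln_mono) auto
        finally show ?thesis using n0 by (simp add: le_divide_eq mult.commute)
      qed
      have B: "A n \<le> kn n powr real m * real k powr (- real m) * \<rho> m ^ n" by (rule upper[OF m1])
      have "ln (A n) \<le> ln (kn n powr real m * real k powr (- real m) * \<rho> m ^ n)"
        using Apos B by (intro ln_mono) auto
      also have "\<dots> = real m * ln (kn n) - real m * ln (real k) + real n * ln (\<rho> m)"
        using kn_pos[of n] rp k by (simp add: ln_mult ln_powr ln_realpow)
      also have "\<dots> \<le> real m * (\<theta> * real n) + real n * ln (\<rho> m)"
      proof -
        have "real m * ln (kn n) \<le> real m * (\<theta> * real n)" using elim(2) by (intro mult_left_mono) auto
        moreover have "0 \<le> real m * ln (real k)" using k by simp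
        ultimately show ?thesis by linarith
      qed
      finally have "ln (A n) / real n \<le> real m * \<theta> + ln (\<rho> m)"
        using n0 by (simp add: divide_le_eq algebra_simps)
      also have "real m * \<theta> = \<epsilon>' / 4" using m1 by (simp add: \<theta>_def)
      finally have up: "ln (A n) / real n < ln \<gamma> + \<epsilon>'" using rm e by linarith
      show ?case using lo up by (simp add: dist_real_def)
    qed
  qed
qed

end
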